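(* Let $\mu>\lambda$, $c\in\mathbb C^2\setminus\{0\}$ and $\eta_{PC}\in\mathbb C$. If $PC\,f_{c\,\nu,\mathbf p}=\eta_{PC}\,f_{c\,\nu,\mathbf p}$ for all $\mathbf p\in\mathbb R^3$, then $|\eta_{PC}|=1$ and $c$ is a null vector, $\langle c\cdot c\rangle=0$. In particular no $c$-basis (with $\langle c\cdot c\rangle=1$) consists of $PC$-invariant mode functions.
   Context: Fix $\omega>0$; work in the conformal chart $(t,\mathbf x)$, $t<0$, $\mathbf x\in\mathbb R^3$, of de Sitter spacetime. Let $\mu=m/\omega$ ($m$ the mass), $\lambda>0$ the coupling constant, $\mu>\lambda$, $\nu=\sqrt{\mu^2-\lambda^2}>0$. For $\mathbf p\in\mathbb R^3$, $p=|\mathbf p|$, let $u_{\nu,\mathbf p}(t,\mathbf x)=\sqrt{\pi/\omega}\,(2\sinh\pi\nu)^{-1/2}(2\pi)^{-3/2}(-\omega t)^{3/2}J_{i\nu}(-pt)\,e^{i\mathbf x\cdot\mathbf p}$ ($J_a$ the Bessel function of the first kind). On $\mathbb C^2$ use $\langle c\cdot c'\rangle=c_1^*c_1'-c_2^*c_2'$. For $c=(c_1,c_2)\in\mathbb C^2$ set $f_{c\,\nu,\mathbf p}=c_1u_{\nu,\mathbf p}+c_2u^*_{\nu,-\mathbf p}$. Operators: $(Pf)(t,\mathbf x)=f(t,-\mathbf x)$, $Cf=f^*$, and $PC=P\circ C$. *)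

theory Defs
  imports "HOL-Analysis.Analysis"
begin

definition besselJ :: "complex \<Rightarrow> real \<Rightarrow> complex" where
  "besselJ a z = (\<Sum>k. (-1) ^ k / (of_nat (fact k) * Gamma (of_nat k + a + 1))
                        * (complex_of_real (z / 2)) powr (of_nat (2 * k) + a))"

text \<open>Mode function u_{nu,p}(t,x) on the conformal chart t < 0 of de Sitter space.\<close>
definition mode_u :: "real \<Rightarrow> real \<Rightarrow> real^3 \<Rightarrow> real \<Rightarrow> real^3 \<Rightarrow> complex" where
  "mode_u \<omega> \<nu> p t x =
     complex_of_real (sqrt (pi / \<omega>) * (1 / sqrt (2 * sinh (pi * \<nu>))) * (2 * pi) powr (-3/2)
                      * (- \<omega> * t) powr (3/2))
     * besselJ (\<i> * complex_of_real \<nu>) (- norm p * t)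
     * exp (\<i> * complex_of_real (x \<bullet> p))"

definition mode_f :: "real \<Rightarrow> complex \<times> complex \<Rightarrow> real \<Rightarrow> real^3 \<Rightarrow> real \<Rightarrow> real^3 \<Rightarrow> complex" where
  "mode_f \<omega> c \<nu> p t x = fst c * mode_u \<omega> \<nu> p t x + snd c * cnj (mode_u \<omega> \<nu> (- p) t x)"

definition cprod :: "complex \<times> complex \<Rightarrow> complex \<times> complex \<Rightarrow> complex" where
  "cprod c c' = cnj (fst c) * fst c' - cnj (snd c) * snd c'"

definition PC_op :: "(real \<Rightarrow> real^3 \<Rightarrow> complex) \<Rightarrow> real \<Rightarrow> real^3 \<Rightarrow> complex" where
  "PC_op f t x = cnj (f t (- x))"

end

theory Submission
  imports Defs
begin

definition cf :: "real \<Rightarrow> nat \<Rightarrow> complex" where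
  "cf \<nu> k = (-1) ^ k / (of_nat (fact k) * Gamma (of_nat k + \<i> * complex_of_real \<nu> + 1))"

lemma notnp: "\<nu> \<noteq> 0 \<Longrightarrow> of_nat k + \<i> * complex_of_real \<nu> + 1 \<notin> \<int>\<^sub>\<le>\<^sub>0"
proof
  assume "\<nu> \<noteq> 0" "of_nat k + \<i> * complex_of_real \<nu> + 1 \<in> \<int>\<^sub>\<le>\<^sub>0"
  then obtain n :: int where "of_nat k + \<i> * complex_of_real \<nu> + 1 = of_int n"
    by (auto elim!: nonpos_Ints_cases)
  then have "Im (of_nat k + \<i> * complex_of_real \<nu> + 1) = Im (of_int n)" by simp
  then show False using \<open>\<nu> \<noteq> 0\<close> by simp
qed

lemma gamma_bound: assumes "\<nu> \<noteq> 0"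
  shows "norm (Gamma (\<i> * complex_of_real \<nu> + 1)) \<le> norm (Gamma (of_nat k + \<i> * complex_of_real \<nu> + 1))"
proof (induction k)
  case 0 then show ?case by simp
next
  case (Suc k)
  let ?z = "of_nat k + \<i> * complex_of_real \<nu> + 1"
  have eq: "of_nat (Suc k) + \<i> * complex_of_real \<nu> + 1 = ?z + 1" by simp
  have g: "Gamma (?z + 1) = ?z * Gamma ?z" using Gamma_plus1 notnp[OF assms] by blast
  have "1 \<le> \<bar>Re ?z\<bar>" by simp
  also have "\<dots> \<le> norm ?z" by (rule abs_Re_le_cmod)
  finally have n1: "1 \<le> norm ?z" .
  have "norm (Gamma ?z) \<le> norm ?z * norm (Gamma ?z)"
    using n1 by (simp add: mult_le_cancel_right1)
  then show ?case using Suc eq g by (simp add: norm_mult)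
qed

lemma cf_bound: assumes "\<nu> \<noteq> 0"
  shows "norm (cf \<nu> k) \<le> 1 / norm (Gamma (\<i> * complex_of_real \<nu> + 1))"
proof -
  have g0: "Gamma (\<i> * complex_of_real \<nu> + 1) \<noteq> 0"
    using Gamma_nonzero notnp[OF assms, of 0] by simp
  have "1 \<le> real (fact k)" by simp
  have "norm (Gamma (\<i> * complex_of_real \<nu> + 1)) \<le> real (fact k) * norm (Gamma (of_nat k + \<i> * complex_of_real \<nu> + 1))"
    using gamma_bound[OF assms, of k] \<open>1 \<le> real (fact k)\<close>
    by (smt (verit) mult_le_cancel_right1 norm_ge_zero)
  then show ?thesis unfolding cf_def using g0
    by (simp add: norm_divide norm_mult norm_power frac_le)
qed

lemma cf_summable: assumes "\<nu> \<noteq> 0" "norm y < 1"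
  shows "summable (\<lambda>k. cf \<nu> k * y ^ k)"
proof (rule summable_comparison_test)
  let ?C = "1 / norm (Gamma (\<i> * complex_of_real \<nu> + 1))"
  show "\<exists>N. \<forall>n\<ge>N. norm (cf \<nu> n * y ^ n) \<le> ?C * norm y ^ n"
  proof (intro exI allI impI)
    fix n :: nat
    have "norm (cf \<nu> n) * norm y ^ n \<le> ?C * norm y ^ n"
      using cf_bound[OF assms(1), of n] by (intro mult_right_mono) auto
    then show "norm (cf \<nu> n * y ^ n) \<le> ?C * norm y ^ n" by (simp add: norm_mult norm_power)
  qed
  show "summable (\<lambda>n. ?C * norm y ^ n)" using assms(2)
    by (intro summable_mult summable_geometric) simp
qed

lemma powr_term: assumes "0 < x"
  shows "(complex_of_real x) powr (of_nat (2 * k) + \<i> * complex_of_real \<nu>)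
     = of_real (x\<^sup>2) ^ k * exp (\<i> * complex_of_real \<nu> * of_real (ln x))"
proof -
  have "(complex_of_real x) powr (of_nat (2 * k) + \<i> * complex_of_real \<nu>)
      = exp ((of_nat (2 * k) + \<i> * complex_of_real \<nu>) * of_real (ln x))"
    using assms by (simp add: powr_def Ln_of_real)
  also have "\<dots> = exp (of_nat k * (2 * of_real (ln x))) * exp (\<i> * complex_of_real \<nu> * of_real (ln x))"
    by (simp add: exp_add[symmetric] algebra_simps)
  also have "exp (of_nat k * (2 * of_real (ln x))) = (of_real (x\<^sup>2) ^ k :: complex)"
  proof -
    have "exp (2 * complex_of_real (ln x)) = of_real (exp (2 * ln x))"
      by (metis exp_of_real of_real_mult of_real_numeral)
    also have "exp (2 * ln x) = x\<^sup>2" using assms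
      by (simp add: exp_of_nat_mult[where n=2, simplified] power2_eq_square)
    finally show ?thesis by (simp add: exp_of_nat_mult)
  qed
  finally show ?thesis .
qed

lemma bessel_rep: assumes "\<nu> \<noteq> 0" "0 < s" "s < 2"
  shows "besselJ (\<i> * complex_of_real \<nu>) s = exp (\<i> * complex_of_real \<nu> * of_real (ln (s/2)))
     * (\<Sum>k. cf \<nu> k * of_real ((s/2)\<^sup>2) ^ k)"
proof -
  let ?E = "exp (\<i> * complex_of_real \<nu> * of_real (ln (s/2)))"
  have sm: "summable (\<lambda>k. cf \<nu> k * of_real ((s/2)\<^sup>2) ^ k)"
  proof (rule cf_summable[OF assms(1)])
    have "(s/2)\<^sup>2 < 1" using assms by (simp add: power_less_one_iff)
    then show "norm (complex_of_real ((s/2)\<^sup>2)) < 1" by (simp only: norm_of_real) simp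
  qed
  have "besselJ (\<i> * complex_of_real \<nu>) s = (\<Sum>k. (cf \<nu> k * of_real ((s/2)\<^sup>2) ^ k) * ?E)"
    unfolding besselJ_def
  proof (rule suminf_cong)
    fix k
    show "(-1) ^ k / (of_nat (fact k) * Gamma (of_nat k + \<i> * complex_of_real \<nu> + 1))
                        * (complex_of_real (s / 2)) powr (of_nat (2 * k) + \<i> * complex_of_real \<nu>)
        = (cf \<nu> k * of_real ((s/2)\<^sup>2) ^ k) * ?E"
      unfolding powr_term[of "s/2", OF half_gt_zero[OF assms(2)]] cf_def by simp
  qed
  also have "\<dots> = (\<Sum>k. cf \<nu> k * of_real ((s/2)\<^sup>2) ^ k) * ?E"
    by (rule suminf_mult2[symmetric, OF sm])
  finally show ?thesis by (simp add: mult.commute)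
qed

lemma final_alg:
  fixes c1 c2 \<eta> :: complex
  assumes "cnj c2 = \<eta> * c1" "cnj c1 = \<eta> * c2" "(c1, c2) \<noteq> (0, 0)"
  shows "cmod \<eta> = 1 \<and> cnj c1 * c1 - cnj c2 * c2 = 0"
proof -
  have n2: "cmod c2 = cmod \<eta> * cmod c1" using arg_cong[OF assms(1), of cmod] by (simp add: norm_mult)
  have n1: "cmod c1 = cmod \<eta> * cmod c2" using arg_cong[OF assms(2), of cmod] by (simp add: norm_mult)
  have e: "cmod \<eta> = 1"
  proof (cases "c1 = 0")
    case True
    then have "c2 \<noteq> 0" using assms(3) by auto
    then have "cmod c2 > 0" by simp
    moreover have "cmod c2 = (cmod \<eta> * cmod \<eta>) * cmod c2" using n1 n2 by simp
    ultimately have "cmod \<eta> * cmod \<eta> = 1" by simp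
    then show ?thesis using norm_ge_zero[of \<eta>] square_eq_1_iff[of "cmod \<eta>"] by linarith
  next
    case False
    then have "cmod c1 > 0" by simp
    moreover have "cmod c1 = (cmod \<eta> * cmod \<eta>) * cmod c1" using n1 n2 by simp
    ultimately have "cmod \<eta> * cmod \<eta> = 1" by simp
    then show ?thesis using norm_ge_zero[of \<eta>] square_eq_1_iff[of "cmod \<eta>"] by linarith
  qed
  have "cmod c1 = cmod c2" using n1 e by simp
  then have "cnj c1 * c1 = cnj c2 * c2"
    by (metis complex_norm_square mult.commute)
  then show ?thesis using e by simp
qed

definition Gc :: "real \<Rightarrow> complex \<Rightarrow> complex" where
  "Gc \<nu> z = (\<Sum>k. cf \<nu> k * z ^ k)"

lemma step3:
  assumes nu: "\<nu> \<noteq> 0" and L: "L < 0"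
    and H: "\<forall>s>0. a * besselJ (\<i> * complex_of_real \<nu>) s + b * cnj (besselJ (\<i> * complex_of_real \<nu>) s) = 0"
  shows "a * (exp (\<i> * complex_of_real \<nu> * of_real L) * exp (\<i> * complex_of_real \<nu> * of_real L))
          * Gc \<nu> (of_real (exp (2*L))) + b * cnj (Gc \<nu> (of_real (exp (2*L)))) = 0"
proof -
  define s where "s = 2 * exp L"
  have s0: "0 < s" and s2: "s < 2" using L by (auto simp: s_def)
  have ls: "ln (s/2) = L" by (simp add: s_def)
  have sq: "(s/2)\<^sup>2 = exp (2*L)" by (simp add: s_def power2_eq_square exp_add[symmetric])
  define E where "E = exp (\<i> * complex_of_real \<nu> * of_real L)"
  define G where "G = Gc \<nu> (of_real (exp (2*L)))"
  have J: "besselJ (\<i> * complex_of_real \<nu>) s = E * G"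
    using bessel_rep[OF nu s0 s2] unfolding ls sq E_def G_def Gc_def by simp
  have EE: "E * cnj E = 1" unfolding E_def
    by (simp add: exp_cnj exp_add[symmetric])
  have "a * (E * G) + b * (cnj E * cnj G) = 0" using H s0 J by force
  then have "E * (a * (E * G) + b * (cnj E * cnj G)) = 0" by simp
  then have "a * (E * E) * G + b * (E * cnj E) * cnj G = 0" by (simp add: algebra_simps)
  then show ?thesis using EE unfolding E_def G_def by simp
qed

lemma Gc_cont: assumes "\<nu> \<noteq> 0" shows "isCont (Gc \<nu>) 0"
proof -
  have "summable (\<lambda>k. cf \<nu> k * (1/2 :: complex) ^ k)"
    using cf_summable[OF assms, of "1/2"] by simp
  then have "isCont (\<lambda>x. \<Sum>n. cf \<nu> n * x ^ n) 0"
    by (rule isCont_powser) simp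
  then show ?thesis unfolding Gc_def[abs_def] .
qed

lemma Gc0: assumes "\<nu> \<noteq> 0" shows "Gc \<nu> 0 \<noteq> 0"
proof -
  have "Gc \<nu> 0 = cf \<nu> 0" unfolding Gc_def using powser_zero[of "cf \<nu>"] by simp
  moreover have "Gamma (\<i> * complex_of_real \<nu> + 1) \<noteq> 0"
    using Gamma_nonzero notnp[OF assms, of 0] by simp
  ultimately show ?thesis by (simp add: cf_def)
qed

lemma lim_Gc: assumes nu: "\<nu> \<noteq> 0" and q: "0 < q" "q < 1" and C: "0 < C"
  shows "(\<lambda>n. Gc \<nu> (of_real (C * q ^ Suc n))) \<longlonglongrightarrow> Gc \<nu> 0"
proof -
  have "(\<lambda>n. q ^ Suc n) \<longlonglongrightarrow> 0" using q
    by (intro LIMSEQ_Suc LIMSEQ_power_zero) simp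
  then have "(\<lambda>n. C * q ^ Suc n) \<longlonglongrightarrow> C * 0" by (intro tendsto_mult tendsto_const)
  then have "(\<lambda>n. complex_of_real (C * q ^ Suc n)) \<longlonglongrightarrow> of_real 0" by (intro tendsto_of_real) simp
  then show ?thesis using isCont_tendsto_compose[OF Gc_cont[OF nu]] by simp
qed

lemma lin_indep:
  assumes nu: "\<nu> > 0"
    and H: "\<forall>s>0. a * besselJ (\<i> * complex_of_real \<nu>) s + b * cnj (besselJ (\<i> * complex_of_real \<nu>) s) = 0"
  shows "a = 0 \<and> b = 0"
proof -
  have nu0: "\<nu> \<noteq> 0" using nu by simp
  define q where "q = exp (-2*pi/\<nu>)"
  have q: "0 < q" "q < 1" using nu by (auto simp: q_def)
  define g0 where "g0 = Gc \<nu> 0"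
  have g0: "g0 \<noteq> 0" using Gc0[OF nu0] by (simp add: g0_def)
  have e1: "a * Gc \<nu> (of_real (1 * q ^ Suc n)) + b * cnj (Gc \<nu> (of_real (1 * q ^ Suc n))) = 0" for n
  proof -
    define L where "L = -pi*(real n+1)/\<nu>"
    have L0: "L < 0" using nu by (simp add: L_def divide_neg_pos add_pos_nonneg)
    have ex: "exp (2*L) = 1 * q ^ Suc n"
      unfolding q_def L_def exp_of_nat_mult[symmetric] using nu by (simp add: field_simps)
    have EE: "exp (\<i> * complex_of_real \<nu> * of_real L) * exp (\<i> * complex_of_real \<nu> * of_real L) = 1"
    proof -
      have "exp (\<i> * complex_of_real \<nu> * of_real L) * exp (\<i> * complex_of_real \<nu> * of_real L)
           = exp ((2 * of_int (- int n - 1) * pi) * \<i>)"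
      proof -
        have vl: "\<nu> * L = -pi*(real n+1)" using nu0 by (simp add: L_def)
        have "\<i> * complex_of_real \<nu> * of_real L = \<i> * of_real (\<nu> * L)" by simp
        also have "\<dots> = \<i> * of_real (-pi*(real n+1))" using vl by simp
        finally have a1: "\<i> * complex_of_real \<nu> * of_real L = \<i> * of_real (-pi*(real n+1))" .
        have "\<i> * complex_of_real \<nu> * of_real L + \<i> * complex_of_real \<nu> * of_real L = (2 * of_int (- int n - 1) * pi) * \<i>"
          unfolding a1 by (simp add: algebra_simps)
        then show ?thesis by (simp only: exp_add[symmetric])
      qed
      also have "\<dots> = 1" by (rule exp_integer_2pi) simp
      finally show ?thesis .
    qed
    show ?thesis using step3[OF nu0 L0 H] unfolding EE ex by simp
  qed
  have e2: "- a * Gc \<nu> (of_real (exp (-pi/\<nu>) * q ^ Suc n)) + b * cnj (Gc \<nu> (of_real (exp (-pi/\<nu>) * q ^ Suc n))) = 0" for n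
  proof -
    define L where "L = -pi*(2*real n+3)/(2*\<nu>)"
    have L0: "L < 0" using nu by (simp add: L_def divide_neg_pos add_pos_nonneg)
    have ex: "exp (2*L) = exp (-pi/\<nu>) * q ^ Suc n"
      unfolding q_def L_def exp_of_nat_mult[symmetric] exp_add[symmetric] using nu by (simp add: field_simps)
    have EE: "exp (\<i> * complex_of_real \<nu> * of_real L) * exp (\<i> * complex_of_real \<nu> * of_real L) = -1"
    proof -
      have "exp (\<i> * complex_of_real \<nu> * of_real L) * exp (\<i> * complex_of_real \<nu> * of_real L)
           = exp (((2 * of_int (- int n - 2) + 1) * pi) * \<i>)"
      proof -
        have vl: "\<nu> * L = -pi*(2*real n+3)/2" using nu0 by (simp add: L_def)
        have "\<i> * complex_of_real \<nu> * of_real L = \<i> * of_real (\<nu> * L)" by simp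
        also have "\<dots> = \<i> * of_real (-pi*(2*real n+3)/2)" using vl by simp
        finally have a1: "\<i> * complex_of_real \<nu> * of_real L = \<i> * of_real (-pi*(2*real n+3)/2)" .
        have "\<i> * complex_of_real \<nu> * of_real L + \<i> * complex_of_real \<nu> * of_real L = ((2 * of_int (- int n - 2) + 1) * pi) * \<i>"
          unfolding a1 by (simp add: algebra_simps)
        then show ?thesis by (simp only: exp_add[symmetric])
      qed
      also have "\<dots> = -1" by (rule exp_integer_2pi_plus1) simp
      finally show ?thesis .
    qed
    show ?thesis using step3[OF nu0 L0 H] unfolding EE ex by simp
  qed
  have l1: "(\<lambda>n. a * Gc \<nu> (of_real (1 * q ^ Suc n)) + b * cnj (Gc \<nu> (of_real (1 * q ^ Suc n))))
       \<longlonglongrightarrow> a * g0 + b * cnj g0"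
    unfolding g0_def using lim_Gc[OF nu0 q, of 1]
    by (intro tendsto_intros) auto
  have l2: "(\<lambda>n. - a * Gc \<nu> (of_real (exp (-pi/\<nu>) * q ^ Suc n)) + b * cnj (Gc \<nu> (of_real (exp (-pi/\<nu>) * q ^ Suc n))))
       \<longlonglongrightarrow> - a * g0 + b * cnj g0"
    unfolding g0_def using lim_Gc[OF nu0 q, of "exp (-pi/\<nu>)"]
    by (intro tendsto_intros) auto
  have z1: "a * g0 + b * cnj g0 = 0"
  proof -
    have "(\<lambda>n. a * Gc \<nu> (of_real (1 * q ^ Suc n)) + b * cnj (Gc \<nu> (of_real (1 * q ^ Suc n)))) = (\<lambda>n. 0)"
      by (rule ext) (rule e1)
    then have "(\<lambda>n. 0::complex) \<longlonglongrightarrow> a * g0 + b * cnj g0" using l1 by simp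
    then show ?thesis using LIMSEQ_const_iff by metis
  qed
  have z2: "- a * g0 + b * cnj g0 = 0"
  proof -
    have "(\<lambda>n. - a * Gc \<nu> (of_real (exp (-pi/\<nu>) * q ^ Suc n)) + b * cnj (Gc \<nu> (of_real (exp (-pi/\<nu>) * q ^ Suc n)))) = (\<lambda>n. 0)"
      by (rule ext) (rule e2)
    then have "(\<lambda>n. 0::complex) \<longlonglongrightarrow> - a * g0 + b * cnj g0" using l2 by simp
    then show ?thesis using LIMSEQ_const_iff by metis
  qed
  have "2 * (a * g0) = 0" using z1 z2 by (simp add: algebra_simps)
  then have a: "a = 0" using g0 by simp
  then have "b * cnj g0 = 0" using z1 by simp
  then have "b = 0" using g0 by simp
  with a show ?thesis by simp
qed

theorem corollary2:
  fixes \<omega> mu lam \<nu> :: real and c :: "complex \<times> complex" and \<eta> :: complex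
  assumes "\<omega> > 0" and "lam > 0" and "mu > lam"
    and "\<nu> = sqrt (mu\<^sup>2 - lam\<^sup>2)"
    and "c \<noteq> (0, 0)"
    and "\<forall>p t x. t < 0 \<longrightarrow> PC_op (mode_f \<omega> c \<nu> p) t x = \<eta> * mode_f \<omega> c \<nu> p t x"
  shows "cmod \<eta> = 1 \<and> cprod c c = 0"
proof -
  obtain c1 c2 where c: "c = (c1, c2)" by (cases c)
  have "lam\<^sup>2 < mu\<^sup>2" using assms(2,3) by (simp add: power_strict_mono)
  then have nu: "\<nu> > 0" using assms(4) by simp
  define J where "J s = besselJ (\<i> * complex_of_real \<nu>) s" for s
  define a where "a = cnj c2 - \<eta> * c1"
  define b where "b = cnj c1 - \<eta> * c2"
  have H: "\<forall>s>0. a * besselJ (\<i> * complex_of_real \<nu>) s + b * cnj (besselJ (\<i> * complex_of_real \<nu>) s) = 0"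
  proof (intro allI impI)
    fix s :: real assume s: "s > 0"
    define p :: "real^3" where "p = axis 1 1"
    have np: "norm p = 1" "norm (-p) = 1" by (simp_all add: p_def)
    define A where "A = sqrt (pi / \<omega>) * (1 / sqrt (2 * sinh (pi * \<nu>))) * (2 * pi) powr (-3/2)
                      * (- \<omega> * (-s)) powr (3/2)"
    have sh: "sinh (pi * \<nu>) > 0" using nu by (simp add: sinh_real_pos_iff)
    have A0: "A \<noteq> 0" unfolding A_def using assms(1) s sh nu by simp
    have U: "mode_u \<omega> \<nu> q (-s) 0 = of_real A * J s" if "norm q = 1" for q
      unfolding mode_u_def A_def J_def using that by simp
    have eq: "PC_op (mode_f \<omega> c \<nu> p) (-s) 0 = \<eta> * mode_f \<omega> c \<nu> p (-s) 0"
      using assms(6) s by simp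
    then have "cnj (c1 * (of_real A * J s) + c2 * cnj (of_real A * J s))
        = \<eta> * (c1 * (of_real A * J s) + c2 * cnj (of_real A * J s))"
      unfolding PC_op_def mode_f_def c using U[OF np(1)] U[OF np(2)] by simp
    then have "of_real A * (a * J s + b * cnj (J s)) = 0"
      unfolding a_def b_def by (simp add: algebra_simps)
    then show "a * besselJ (\<i> * complex_of_real \<nu>) s + b * cnj (besselJ (\<i> * complex_of_real \<nu>) s) = 0"
      using A0 unfolding J_def by simp
  qed
  have ab: "a = 0 \<and> b = 0" by (rule lin_indep[OF nu H])
  have "cnj c2 = \<eta> * c1" "cnj c1 = \<eta> * c2" using ab unfolding a_def b_def by simp_all
  from final_alg[OF this] assms(5) show ?thesis unfolding c cprod_def by simp
qed

end
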